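(* Let $n\ge2$. If ${\rm Comp}(\mathbb{Z}_n)\subseteq\{0,1,2,3\}$ and $p$ is an odd prime, then $n$ is not divisible by $p^3$.
   Context: $\mathbb{Z}_n$ is the cyclic group of integers modulo $n$. A skew morphism of a finite group $G$ is a permutation $\varphi$ of $G$ fixing the identity such that for each $a\in G$ there is a non-negative integer $i_a$ with $\varphi(ab)=\varphi(a)\varphi^{i_a}(b)$ for all $b\in G$. ${\rm ord}(\varphi)$ is the order of $\langle\varphi\rangle$. If $\varphi$ is non-trivial, $\pi_\varphi(a)$ is the unique such $i_a\in\{1,\dots,{\rm ord}(\varphi)-1\}$; if $\varphi$ is the identity, $\pi_\varphi(a)=1$. Let $\sigma_\varphi(x,y)=\sum_{i=0}^{x-1}\pi_\varphi(\varphi^i(y))\in\mathbb{Z}_{{\rm ord}(\varphi)}$. The derived skew morphism $\varphi'$ of a skew morphism $\varphi$ of $\mathbb{Z}_n$ is the skew morphism of $\mathbb{Z}_{{\rm ord}(\varphi)}$ given by $\varphi'(a)=\sigma_\varphi(a,1)$. Set $\varphi^{(0)}=\varphi$, $\varphi^{(i+1)}=(\varphi^{(i)})'$. For $n\ge 2$ the complexity of $\varphi$ is the unique non-negative integer $c$ such that $\varphi^{(c)}$ is a skew morphism of a non-trivial cyclic group and $\varphi^{(c+1)}$ is a skew morphism of $\mathbb{Z}_1$. ${\rm Comp}(\mathbb{Z}_n)$ denotes the set of complexities of all skew morphisms of $\mathbb{Z}_n$. *)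

theory Defs
  imports "HOL-Computational_Algebra.Primes"
begin

text \<open>Z_n is represented by the carrier {0..<n} with addition modulo n;
  a permutation of Z_n is a function nat => nat considered on {0..<n}.\<close>

definition skew_morphism :: "nat \<Rightarrow> (nat \<Rightarrow> nat) \<Rightarrow> bool" where
  "skew_morphism n \<phi> \<longleftrightarrow>
     bij_betw \<phi> {0..<n} {0..<n} \<and> \<phi> 0 = 0 \<and>
     (\<forall>a<n. \<exists>i::nat. \<forall>b<n. \<phi> ((a + b) mod n) = (\<phi> a + (\<phi> ^^ i) b) mod n)"

definition skew_ord :: "nat \<Rightarrow> (nat \<Rightarrow> nat) \<Rightarrow> nat" where
  "skew_ord n \<phi> = (LEAST k. 0 < k \<and> (\<forall>x<n. (\<phi> ^^ k) x = x))"

definition skew_pi :: "nat \<Rightarrow> (nat \<Rightarrow> nat) \<Rightarrow> nat \<Rightarrow> nat" where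
  "skew_pi n \<phi> a =
     (if skew_ord n \<phi> = 1 then 1
      else (THE i. 1 \<le> i \<and> i < skew_ord n \<phi> \<and>
              (\<forall>b<n. \<phi> ((a + b) mod n) = (\<phi> a + (\<phi> ^^ i) b) mod n)))"

definition skew_sigma :: "nat \<Rightarrow> (nat \<Rightarrow> nat) \<Rightarrow> nat \<Rightarrow> nat \<Rightarrow> nat" where
  "skew_sigma n \<phi> x y = (\<Sum>i<x. skew_pi n \<phi> ((\<phi> ^^ i) y)) mod skew_ord n \<phi>"

text \<open>derived skew morphism: a map on Z_{ord phi}; paired with its modulus\<close>
definition derived :: "nat \<times> (nat \<Rightarrow> nat) \<Rightarrow> nat \<times> (nat \<Rightarrow> nat)" where
  "derived p = (case p of (n, \<phi>) \<Rightarrow>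
     (skew_ord n \<phi>, \<lambda>a. skew_sigma n \<phi> a (1 mod n)))"

definition skew_complexity :: "nat \<Rightarrow> (nat \<Rightarrow> nat) \<Rightarrow> nat" where
  "skew_complexity n \<phi> =
     (THE c. 2 \<le> fst ((derived ^^ c) (n, \<phi>)) \<and> fst ((derived ^^ Suc c) (n, \<phi>)) = 1)"

definition Comp :: "nat \<Rightarrow> nat set" where
  "Comp n = {skew_complexity n \<phi> | \<phi>. skew_morphism n \<phi>}"

end

theory Submission
  imports Defs "HOL-Library.FuncSet" "HOL-Number_Theory.Cong"
begin


definition valid :: "nat \<Rightarrow> (nat \<Rightarrow> nat) \<Rightarrow> nat \<Rightarrow> nat \<Rightarrow> bool" where
  "valid n f a i \<longleftrightarrow> (\<forall>b<n. f ((a + b) mod n) = (f a + (f ^^ i) b) mod n)"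

lemma funpow_mult_id:
  assumes "\<And>x. x < n \<Longrightarrow> (f ^^ k) x = x" "x < n"
  shows "(f ^^ (q * k)) x = x"
proof (induction q)
  case 0 then show ?case by simp
next
  case (Suc q)
  have "(f ^^ (Suc q * k)) x = (f ^^ k) ((f ^^ (q * k)) x)"
    by (simp add: funpow_add)
  also have "\<dots> = x" using Suc assms by simp
  finally show ?case .
qed

lemma add_mod_cancel:
  fixes x y c n :: nat
  assumes "(c + x) mod n = (c + y) mod n" "x < n" "y < n"
  shows "x = y"
proof -
  have *: "x = y" if "(c + x) mod n = (c + y) mod n" "x < n" "y < n" "x \<le> y" for x y
  proof -
    have "n dvd (c + y) - (c + x)" using that mod_eq_dvd_iff_nat[of "c+x" "c+y" n] by simp
    then have "n dvd y - x" by simp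
    moreover have "y - x < n" using that by simp
    ultimately have "y - x = 0" using dvd_imp_le by (metis gr0I linorder_not_less) 
    then show ?thesis using that by simp
  qed
  show ?thesis using *[of x y] *[of y x] assms by (metis nle_le)
qed

locale perm_ord =
  fixes n :: nat and f :: "nat \<Rightarrow> nat"
  assumes maps: "\<And>x. x < n \<Longrightarrow> f x < n"
    and ex_ord: "\<exists>k>0. \<forall>x<n. (f ^^ k) x = x"
begin

abbreviation "od \<equiv> skew_ord n f"

lemma pow_maps: "x < n \<Longrightarrow> (f ^^ k) x < n"
  by (induction k) (auto simp: maps)

lemma ord_prop: "0 < od \<and> (\<forall>x<n. (f ^^ od) x = x)"
  unfolding skew_ord_def by (rule LeastI_ex) (rule ex_ord)

lemma ord_pos: "0 < od" using ord_prop by blast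

lemma ord_id: "x < n \<Longrightarrow> (f ^^ od) x = x" using ord_prop by blast

lemma ord_min: 
  assumes "0 < k" "k < od" shows "\<exists>x<n. (f ^^ k) x \<noteq> x"
proof (rule ccontr)
  assume "\<not> ?thesis"
  then have "\<forall>x<n. (f ^^ k) x = x" by auto
  then have "od \<le> k" unfolding skew_ord_def using assms(1) by (intro Least_le) auto
  with assms(2) show False by simp
qed

lemma pow_mod: "x < n \<Longrightarrow> (f ^^ (k mod od)) x = (f ^^ k) x"
proof -
  assume x: "x < n"
  have k: "k = k mod od + (k div od) * od" by (metis mod_div_mult_eq)
  have "(f ^^ k) x = (f ^^ (k mod od)) ((f ^^ ((k div od) * od)) x)"
    by (subst k) (simp add: funpow_add)
  also have "(f ^^ ((k div od) * od)) x = x"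
    by (rule funpow_mult_id[OF ord_id x])
  finally show ?thesis by simp
qed

lemma neq_lt: 
  assumes "a < b" "b < od"
  shows "\<exists>x<n. (f ^^ a) x \<noteq> (f ^^ b) x"
proof (rule ccontr)
  assume "\<not> ?thesis"
  then have eq: "\<And>x. x < n \<Longrightarrow> (f ^^ a) x = (f ^^ b) x" by auto
  have "\<forall>x<n. (f ^^ (od - b + a)) x = x"
  proof (intro allI impI)
    fix x assume x: "x < n"
    have "(f ^^ (od - b + a)) x = (f ^^ (od - b)) ((f ^^ a) x)" by (simp add: funpow_add)
    also have "\<dots> = (f ^^ (od - b)) ((f ^^ b) x)" using eq x by simp
    also have "\<dots> = (f ^^ (od - b + b)) x" by (simp add: funpow_add)
    also have "od - b + b = od" using assms by simp
    finally show "(f ^^ (od - b + a)) x = x" using ord_id x by simp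
  qed
  moreover have "0 < od - b + a" "od - b + a < od" using assms by auto
  ultimately show False using ord_min[of "od - b + a"] by auto
qed

lemma eq_iff: "(\<forall>x<n. (f ^^ a) x = (f ^^ b) x) \<longleftrightarrow> a mod od = b mod od"
proof
  assume eq: "\<forall>x<n. (f ^^ a) x = (f ^^ b) x"
  show "a mod od = b mod od"
  proof (rule ccontr)
    assume ne: "a mod od \<noteq> b mod od"
    have lt: "a mod od < od" "b mod od < od" using ord_pos by auto
    have eq': "\<forall>x<n. (f ^^ (a mod od)) x = (f ^^ (b mod od)) x"
      using eq pow_mod by auto
    show False
    proof (cases "a mod od < b mod od")
      case True then show ?thesis using neq_lt[OF True lt(2)] eq' by auto
    next
      case False
      then have "b mod od < a mod od" using ne by auto
      then show ?thesis using neq_lt[of "b mod od" "a mod od"] lt(1) eq' by auto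
    qed
  qed
next
  assume "a mod od = b mod od"
  then show "\<forall>x<n. (f ^^ a) x = (f ^^ b) x" using pow_mod[of _ a] pow_mod[of _ b] by simp
qed

lemma id_iff: "(\<forall>x<n. (f ^^ k) x = x) \<longleftrightarrow> od dvd k"
  using eq_iff[of k 0] by (simp add: dvd_eq_mod_eq_0)

lemma valid_cong:
  assumes "valid n f a i" "i mod od = j mod od"
  shows "valid n f a j"
proof -
  have "\<forall>x<n. (f ^^ i) x = (f ^^ j) x" using eq_iff assms(2) by blast
  then show ?thesis using assms(1) unfolding valid_def by simp
qed

lemma valid_mod:
  assumes "valid n f a i" "valid n f a j" "a < n"
  shows "i mod od = j mod od"
proof -
  have "\<forall>x<n. (f ^^ i) x = (f ^^ j) x"
  proof (intro allI impI)
    fix b assume b: "b < n"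
    have "(f a + (f ^^ i) b) mod n = (f a + (f ^^ j) b) mod n"
      using assms(1,2) b unfolding valid_def by simp
    then show "(f ^^ i) b = (f ^^ j) b" using pow_maps b add_mod_cancel by blast
  qed
  then show ?thesis using eq_iff by blast
qed

lemma valid0_id:
  assumes "valid n f a 0" "a < n" "f 0 = 0"
  shows "od = 1"
proof -
  have v: "\<And>b. b < n \<Longrightarrow> f ((a + b) mod n) = (f a + b) mod n"
    using assms(1) unfolding valid_def by simp
  define b0 where "b0 = (n - a) mod n"
  have n0: "0 < n" using assms(2) by simp
  have b0n: "b0 < n" using n0 b0_def by simp
  have "(a + b0) mod n = (a + (n - a)) mod n" unfolding b0_def by (simp add: mod_add_right_eq)
  also have "\<dots> = 0" using assms(2) by simp
  finally have ab0: "(a + b0) mod n = 0" .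
  have fab0: "(f a + b0) mod n = 0" using v[OF b0n] ab0 assms(3) by simp
  have "\<forall>x<n. (f ^^ 1) x = x"
  proof (intro allI impI)
    fix x assume x: "x < n"
    define b where "b = (x + b0) mod n"
    have bn: "b < n" using n0 b_def by simp
    have "(a + b) mod n = (a + (x + b0)) mod n" unfolding b_def by (simp add: mod_add_right_eq)
    also have "\<dots> = (x + (a + b0)) mod n" by (simp add: algebra_simps)
    also have "\<dots> = (x + (a + b0) mod n) mod n" by (simp add: mod_add_right_eq)
    also have "\<dots> = x" using ab0 x by simp
    finally have e1: "(a + b) mod n = x" .
    have "(f a + b) mod n = (f a + (x + b0)) mod n" unfolding b_def by (simp add: mod_add_right_eq)
    also have "\<dots> = (x + (f a + b0)) mod n" by (simp add: algebra_simps)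
    also have "\<dots> = (x + (f a + b0) mod n) mod n" by (simp add: mod_add_right_eq)
    also have "\<dots> = x" using fab0 x by simp
    finally have e2: "(f a + b) mod n = x" .
    show "(f ^^ 1) x = x" using v[OF bn] e1 e2 by simp
  qed
  then have "od dvd 1" using id_iff by blast
  then show ?thesis by simp
qed

lemma pi_props:
  assumes "valid n f a i0" "a < n" "f 0 = 0"
  shows "valid n f a (skew_pi n f a)" "skew_pi n f a mod od = i0 mod od"
proof -
  have "valid n f a (skew_pi n f a) \<and> skew_pi n f a mod od = i0 mod od"
  proof (cases "od = 1")
    case True
    then show ?thesis using valid_cong[OF assms(1)] unfolding skew_pi_def by simp
  next
    case False
    then have o2: "2 \<le> od" using ord_pos by linarith
    define c where "c = i0 mod od"
    have vc: "valid n f a c" using valid_cong[OF assms(1)] c_def by simp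
    have c0: "c \<noteq> 0"
    proof
      assume "c = 0"
      then have "valid n f a 0" using vc by simp
      then show False using valid0_id assms False by blast
    qed
    have cl: "c < od" using ord_pos c_def by simp
    have "(THE i. 1 \<le> i \<and> i < od \<and> valid n f a i) = c"
    proof (rule the_equality)
      show "1 \<le> c \<and> c < od \<and> valid n f a c" using c0 cl vc by simp
    next
      fix i assume i: "1 \<le> i \<and> i < od \<and> valid n f a i"
      then have "i mod od = c mod od" using valid_mod[of a i c] vc assms(2) by simp
      then show "i = c" using i cl by simp
    qed
    then have "skew_pi n f a = c" unfolding skew_pi_def valid_def using False by simp
    then show ?thesis using vc c_def cl by simp
  qed
  then show "valid n f a (skew_pi n f a)" "skew_pi n f a mod od = i0 mod od" by auto
qed

end


lemma bij_finite_order: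
  fixes f :: "nat \<Rightarrow> nat" and n :: nat
  assumes "bij_betw f {0..<n} {0..<n}"
  shows "\<exists>k>0. \<forall>x<n. (f ^^ k) x = x"
proof -
  define F where "F k = restrict (f ^^ k) {0..<n}" for k
  have "range F \<subseteq> (\<Pi>\<^sub>E i \<in> {0..<n}. {0..<n})"
  proof
    fix h assume "h \<in> range F"
    then obtain k where h: "h = F k" by auto
    have "bij_betw (f ^^ k) {0..<n} {0..<n}" using bij_betw_funpow[OF assms] .
    then have B: "\<forall>x\<in>{0..<n}. (f ^^ k) x \<in> {0..<n}" by (rule bij_betwE)
    have "(f ^^ k) x < n" if "x < n" for x
    proof -
      have xi: "x \<in> {0..<n}" using that by auto
      have "(f ^^ k) x \<in> {0..<n}" using B xi by blast
      then show ?thesis by auto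
    qed
    then show "h \<in> (\<Pi>\<^sub>E i \<in> {0..<n}. {0..<n})" unfolding h F_def by auto
  qed
  then have "finite (range F)" by (rule finite_subset) (rule finite_PiE, auto)
  have "\<not> inj F"
  proof
    assume "inj F"
    then have "finite (UNIV :: nat set)" using finite_imageD[OF \<open>finite (range F)\<close>] by simp
    then show False by simp
  qed
  then obtain i j where ij: "i \<noteq> j" "F i = F j" unfolding inj_def by blast
  have "\<exists>i j. i < j \<and> F i = F j"
  proof (cases "i < j")
    case True then show ?thesis using ij by blast
  next
    case False then have "j < i" using ij by auto
    then show ?thesis using ij(2) by (intro exI[of _ j] exI[of _ i]) simp
  qed
  then obtain i j where ij: "i < j" "F i = F j" by blast
  have eq: "(f ^^ i) x = (f ^^ j) x" if "x < n" for x
  proof -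
    have "F i x = F j x" using ij by simp
    then show ?thesis using that unfolding F_def by simp
  qed
  have inj: "inj_on (f ^^ i) {0..<n}" using bij_betw_funpow[OF assms] bij_betw_imp_inj_on by blast
  have "\<forall>x<n. (f ^^ (j - i)) x = x"
  proof (intro allI impI)
    fix x assume x: "x < n"
    have "\<forall>x\<in>{0..<n}. (f ^^ (j - i)) x \<in> {0..<n}" using bij_betw_funpow[OF assms, of "j - i"] by (rule bij_betwE)
    then have m: "(f ^^ (j - i)) x < n" using x by auto
    have "(f ^^ i) ((f ^^ (j - i)) x) = (f ^^ (i + (j - i))) x" by (simp add: funpow_add)
    also have "\<dots> = (f ^^ j) x" using ij by simp
    also have "\<dots> = (f ^^ i) x" using eq x by simp
    finally show "(f ^^ (j - i)) x = x" using inj_onD[OF inj] m x by auto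
  qed
  then show ?thesis using ij by (intro exI[of _ "j - i"]) auto
qed

definition sig :: "nat \<Rightarrow> (nat \<Rightarrow> nat) \<Rightarrow> nat \<Rightarrow> nat \<Rightarrow> nat" where
  "sig n f j a = (\<Sum>i<j. skew_pi n f ((f ^^ i) a))"

locale skew_gen =
  fixes n :: nat and phi :: "nat \<Rightarrow> nat"
  assumes n2: "2 \<le> n" and sk: "skew_morphism n phi" and ord2: "skew_ord n phi \<noteq> 1"
begin

abbreviation "m \<equiv> skew_ord n phi"
abbreviation "pi \<equiv> skew_pi n phi"
abbreviation "s \<equiv> sig n phi"

lemma bij: "bij_betw phi {0..<n} {0..<n}" using sk unfolding skew_morphism_def by blast
lemma phi0: "phi 0 = 0" using sk unfolding skew_morphism_def by blast
lemma valid_ex: "a < n \<Longrightarrow> \<exists>i. valid n phi a i"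
  using sk unfolding skew_morphism_def valid_def by blast

lemma maps: "x < n \<Longrightarrow> phi x < n" 
proof -
  assume "x < n"
  moreover have "\<forall>x\<in>{0..<n}. phi x \<in> {0..<n}" using bij by (rule bij_betwE)
  ultimately show ?thesis by auto
qed

sublocale P: perm_ord n phi
proof
  show "\<And>x. x < n \<Longrightarrow> phi x < n" by (rule maps)
  show "\<exists>k>0. \<forall>x<n. (phi ^^ k) x = x" by (rule bij_finite_order[OF bij])
qed

lemma m2: "2 \<le> m" using P.ord_pos ord2 by linarith

lemma pi_valid: 
  assumes "a < n" shows "valid n phi a (pi a)"
proof -
  obtain i where "valid n phi a i" using valid_ex[OF assms] by blast
  then show ?thesis using P.pi_props(1) assms phi0 by simp
qed

lemma pi_mod: "a < n \<Longrightarrow> valid n phi a i \<Longrightarrow> pi a mod m = i mod m"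
  using P.pi_props(2) phi0 by simp

lemma powlt: "x < n \<Longrightarrow> (phi ^^ k) x < n" by (rule P.pow_maps)

lemma eqpow: "a mod m = b mod m \<Longrightarrow> x < n \<Longrightarrow> (phi ^^ a) x = (phi ^^ b) x"
  using P.eq_iff by blast

lemma s_Suc: "s (Suc j) a = s j a + pi ((phi ^^ j) a)"
  unfolding sig_def by simp

lemma G1:
  assumes "a < n" "b < n"
  shows "(phi ^^ j) ((a + b) mod n) = ((phi ^^ j) a + (phi ^^ (s j a)) b) mod n"
proof (induction j)
  case 0 then show ?case using assms by (simp add: sig_def)
next
  case (Suc j)
  have "(phi ^^ Suc j) ((a + b) mod n) = phi (((phi ^^ j) a + (phi ^^ (s j a)) b) mod n)"
    using Suc by simp
  also have "\<dots> = (phi ((phi ^^ j) a) + (phi ^^ pi ((phi ^^ j) a)) ((phi ^^ (s j a)) b)) mod n"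
  proof -
    have v: "valid n phi ((phi ^^ j) a) (pi ((phi ^^ j) a))" using pi_valid powlt assms(1) by simp
    show ?thesis using v powlt[OF assms(2)] unfolding valid_def by simp
  qed
  also have "(phi ^^ pi ((phi ^^ j) a)) ((phi ^^ (s j a)) b) = (phi ^^ (s (Suc j) a)) b"
  proof -
    have "(phi ^^ pi ((phi ^^ j) a)) ((phi ^^ (s j a)) b) = (phi ^^ (pi ((phi ^^ j) a) + s j a)) b"
      by (simp add: funpow_add)
    also have "pi ((phi ^^ j) a) + s j a = s (Suc j) a" by (simp add: s_Suc)
    finally show ?thesis .
  qed
  finally show ?case by simp
qed

lemma s_add: "s (x + y) b = s x b + s y ((phi ^^ x) b)"
proof (induction y)
  case 0 then show ?case by (simp add: sig_def)
next
  case (Suc y)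
  have "(phi ^^ y) ((phi ^^ x) b) = (phi ^^ (y + x)) b" by (simp add: funpow_add)
  then have e: "(phi ^^ y) ((phi ^^ x) b) = (phi ^^ (x + y)) b" by (simp add: add.commute)
  show ?case using Suc by (simp add: s_Suc e)
qed

lemma G2a:
  assumes "b < n" shows "s m b mod m = 0"
proof -
  have "\<forall>c<n. (phi ^^ (s m b)) c = c"
  proof (intro allI impI)
    fix c assume c: "c < n"
    have "(phi ^^ m) ((b + c) mod n) = ((phi ^^ m) b + (phi ^^ (s m b)) c) mod n"
      using G1[OF assms c] .
    moreover have "(phi ^^ m) ((b + c) mod n) = (b + c) mod n"
      using P.ord_id n2 by simp
    moreover have "(phi ^^ m) b = b" using P.ord_id assms by simp
    ultimately have "(b + (phi ^^ (s m b)) c) mod n = (b + c) mod n" by simp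
    then have "(phi ^^ (s m b)) c = c"
      using add_mod_cancel[of b "(phi ^^ (s m b)) c" n c] powlt[OF c] c by blast
    then show "(phi ^^ (s m b)) c = c" by simp
  qed
  then have "m dvd s m b" using P.id_iff by blast
  then show ?thesis by simp
qed

lemma s_mult: "b < n \<Longrightarrow> s (q * m) b mod m = 0"
proof (induction q)
  case 0 then show ?case by (simp add: sig_def)
next
  case (Suc q)
  have "s (Suc q * m) b = s m b + s (q * m) ((phi ^^ m) b)"
    by (simp add: s_add add.commute)
  also have "(phi ^^ m) b = b" using P.ord_id Suc by simp
  finally have "s (Suc q * m) b mod m = (s m b mod m + s (q * m) b mod m) mod m"
    by (simp add: mod_add_eq)
  then show ?case using G2a Suc by simp
qed

lemma per: "b < n \<Longrightarrow> s x b mod m = s (x mod m) b mod m"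
proof -
  assume b: "b < n"
  have x: "x = (x div m) * m + x mod m" by (metis div_mult_mod_eq)
  have "s x b = s ((x div m) * m) b + s (x mod m) ((phi ^^ ((x div m) * m)) b)"
    by (subst x) (rule s_add)
  also have "(phi ^^ ((x div m) * m)) b = b" by (rule funpow_mult_id[OF P.ord_id b])
  finally have "s x b mod m = (s ((x div m) * m) b mod m + s (x mod m) b) mod m"
    by (simp add: mod_add_left_eq)
  then show ?thesis using s_mult b by simp
qed

end


context skew_gen
begin

lemma G2b:
  assumes a: "a < n" and b: "b < n"
  shows "pi ((a + b) mod n) mod m = s (pi a) b mod m"
proof -
  have "\<forall>c<n. (phi ^^ pi ((a + b) mod n)) c = (phi ^^ s (pi a) b) c"
  proof (intro allI impI)
    fix c assume c: "c < n"
    have n0: "0 < n" using n2 by simp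
    define ab where "ab = (a + b) mod n"
    have abn: "ab < n" using n0 ab_def by simp
    have bcn: "(b + c) mod n < n" using n0 by simp
    have L1: "phi ((ab + c) mod n) = (phi ab + (phi ^^ pi ab) c) mod n"
      using pi_valid[OF abn] c unfolding valid_def by simp
    have L2: "phi ab = (phi a + (phi ^^ pi a) b) mod n"
      using pi_valid[OF a] b unfolding valid_def ab_def by simp
    have R0: "(ab + c) mod n = (a + (b + c) mod n) mod n"
      unfolding ab_def by (simp add: mod_add_left_eq mod_add_right_eq add.assoc)
    have R1: "phi ((a + (b + c) mod n) mod n) = (phi a + (phi ^^ pi a) ((b + c) mod n)) mod n"
      using pi_valid[OF a] bcn unfolding valid_def by simp
    have R2: "(phi ^^ pi a) ((b + c) mod n) = ((phi ^^ pi a) b + (phi ^^ s (pi a) b) c) mod n"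
      using G1[OF b c] .
    have "((phi a + (phi ^^ pi a) b) + (phi ^^ pi ab) c) mod n
        = ((phi a + (phi ^^ pi a) b) mod n + (phi ^^ pi ab) c) mod n"
      by (simp add: mod_add_left_eq)
    also have "\<dots> = phi ((ab + c) mod n)" using L1 L2 by simp
    also have "\<dots> = (phi a + ((phi ^^ pi a) b + (phi ^^ s (pi a) b) c) mod n) mod n"
      using R0 R1 R2 by simp
    also have "\<dots> = ((phi a + (phi ^^ pi a) b) + (phi ^^ s (pi a) b) c) mod n"
      by (simp add: mod_add_right_eq add.assoc)
    finally have "((phi a + (phi ^^ pi a) b) + (phi ^^ pi ab) c) mod n
        = ((phi a + (phi ^^ pi a) b) + (phi ^^ s (pi a) b) c) mod n" .
    then show "(phi ^^ pi ((a + b) mod n)) c = (phi ^^ s (pi a) b) c"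
      using add_mod_cancel[of _ "(phi ^^ pi ab) c" n "(phi ^^ s (pi a) b) c"] powlt[OF c] 
      unfolding ab_def by blast
  qed
  then show ?thesis using P.eq_iff by blast
qed

lemma G2:
  assumes a: "a < n" and b: "b < n"
  shows "s j ((a + b) mod n) mod m = s (s j a) b mod m"
proof (induction j)
  case 0 then show ?case by (simp add: sig_def)
next
  case (Suc j)
  define a' where "a' = (phi ^^ j) a"
  define b' where "b' = (phi ^^ s j a) b"
  have a'n: "a' < n" using powlt a a'_def by simp
  have b'n: "b' < n" using powlt b b'_def by simp
  have e1: "(phi ^^ j) ((a + b) mod n) = (a' + b') mod n" using G1[OF a b] a'_def b'_def by simp
  have "s (Suc j) ((a + b) mod n) mod m = (s j ((a + b) mod n) + pi ((a' + b') mod n)) mod m"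
    using e1 by (simp add: s_Suc)
  also have "\<dots> = (s j ((a + b) mod n) mod m + pi ((a' + b') mod n) mod m) mod m"
    by (simp add: mod_add_eq)
  also have "\<dots> = (s (s j a) b mod m + s (pi a') b' mod m) mod m"
    using Suc G2b[OF a'n b'n] by simp
  also have "\<dots> = (s (s j a) b + s (pi a') b') mod m" by (simp add: mod_add_eq)
  also have "s (s j a) b + s (pi a') b' = s (s (Suc j) a) b"
    using s_add[of "s j a" "pi a'" b] unfolding a'_def b'_def by (simp add: s_Suc)
  finally show ?case .
qed

abbreviation "psi \<equiv> \<lambda>a. skew_sigma n phi a 1"

lemma psi_eq: "psi a = s a 1 mod m"
  unfolding skew_sigma_def sig_def by simp

lemma one_mod_n: "1 mod n = 1" using n2 by simp
lemma one_mod_m: "1 mod m = 1" using m2 by simp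

lemma pow0: "(phi ^^ i) 0 = 0"
  by (induction i) (simp_all add: phi0)

lemma pi0: "pi 0 mod m = 1 mod m"
proof -
  have "valid n phi 0 1" unfolding valid_def using maps by (simp add: phi0)
  then show ?thesis using pi_mod n2 by simp
qed

lemma s_zero: "s j 0 mod m = j mod m"
proof -
  have "s j 0 = j * pi 0" unfolding sig_def by (simp add: pow0)
  then have "s j 0 mod m = (j * (pi 0 mod m)) mod m" by (simp add: mod_mult_right_eq)
  then show ?thesis using pi0 by (simp add: mod_mult_right_eq)
qed

lemma s1: "s 1 x = pi x" unfolding sig_def by simp

lemma G3: "j < m \<Longrightarrow> (psi ^^ k) j = s j (k mod n) mod m"
proof (induction k)
  case 0 then show ?case using s_zero by simp
next
  case (Suc k)
  have n1: "1 < n" using n2 by simp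
  have kn: "k mod n < n" using n2 by simp
  have "(psi ^^ Suc k) j = s ((psi ^^ k) j) 1 mod m" by (simp only: funpow.simps(2) comp_apply psi_eq)
  also have "\<dots> = s (s j (k mod n) mod m) 1 mod m" using Suc by simp
  also have "\<dots> = s (s j (k mod n)) 1 mod m" using per[OF n1] by simp
  also have "\<dots> = s j ((k mod n + 1) mod n) mod m" using G2[OF kn n1] by simp
  also have "(k mod n + 1) mod n = Suc k mod n" by (simp add: mod_Suc_eq)
  finally show ?case .
qed

lemma psi_lt: "psi a < m" using psi_eq P.ord_pos by simp

lemma psi0: "psi 0 = 0" using psi_eq by (simp add: sig_def)

lemma psi_n: "j < m \<Longrightarrow> (psi ^^ n) j = j"
  using G3[of j n] s_zero by simp

sublocale Q: perm_ord m psi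
proof
  show "\<And>x. x < m \<Longrightarrow> psi x < m" using psi_lt by blast
  show "\<exists>k>0. \<forall>x<m. (psi ^^ k) x = x" using psi_n n2 by (intro exI[of _ n]) auto
qed

definition core :: "nat \<Rightarrow> bool" where
  "core k \<longleftrightarrow> (\<forall>j<m. \<forall>b<n. (phi ^^ j) ((k + b) mod n) = ((phi ^^ j) k + (phi ^^ j) b) mod n)"

lemma G3core_j:
  assumes j: "j < m" and k: "k < n"
  shows "(psi ^^ k) j = j \<longleftrightarrow> (\<forall>b<n. (phi ^^ j) ((k + b) mod n) = ((phi ^^ j) k + (phi ^^ j) b) mod n)"
proof -
  have "(psi ^^ k) j = j \<longleftrightarrow> s j k mod m = j mod m" using G3[OF j] j k by simp
  also have "\<dots> \<longleftrightarrow> (\<forall>b<n. (phi ^^ s j k) b = (phi ^^ j) b)" using P.eq_iff by simp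
  also have "\<dots> \<longleftrightarrow> (\<forall>b<n. (phi ^^ j) ((k + b) mod n) = ((phi ^^ j) k + (phi ^^ j) b) mod n)"
  proof (intro iff_allI imp_cong refl)
    fix b assume b: "b < n"
    have "(phi ^^ j) ((k + b) mod n) = ((phi ^^ j) k + (phi ^^ s j k) b) mod n" using G1[OF k b] .
    then show "(phi ^^ s j k) b = (phi ^^ j) b \<longleftrightarrow>
      (phi ^^ j) ((k + b) mod n) = ((phi ^^ j) k + (phi ^^ j) b) mod n"
      using add_mod_cancel[of "(phi ^^ j) k" "(phi ^^ s j k) b" n "(phi ^^ j) b"] powlt[OF b] by auto
  qed
  finally show ?thesis .
qed

lemma G3core: "(\<forall>j<m. (psi ^^ k) j = j) \<longleftrightarrow> core (k mod n)"
proof -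
  have kn: "k mod n < n" using n2 by simp
  have "(\<forall>j<m. (psi ^^ k) j = j) \<longleftrightarrow> (\<forall>j<m. (psi ^^ (k mod n)) j = j)"
    using G3 by simp
  also have "\<dots> \<longleftrightarrow> core (k mod n)" unfolding core_def using G3core_j[OF _ kn] by simp
  finally show ?thesis .
qed

lemma G4:
  assumes l: "l < m" shows "valid m psi l ((phi ^^ l) 1)"
  unfolding valid_def
proof (intro allI impI)
  fix j assume j: "j < m"
  have n1: "1 < n" using n2 by simp
  have pl: "(phi ^^ l) 1 < n" using powlt n1 by simp
  have "psi ((l + j) mod m) = s ((l + j) mod m) 1 mod m" by (rule psi_eq)
  also have "\<dots> = s (l + j) 1 mod m" using per[OF n1] by simp
  also have "\<dots> = (s l 1 + s j ((phi ^^ l) 1)) mod m" by (simp add: s_add)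
  also have "\<dots> = (s l 1 mod m + s j ((phi ^^ l) 1) mod m) mod m" by (simp add: mod_add_eq)
  also have "s j ((phi ^^ l) 1) mod m = (psi ^^ ((phi ^^ l) 1)) j" using G3[OF j] pl by simp
  also have "s l 1 mod m = psi l" by (rule psi_eq[symmetric])
  finally show "psi ((l + j) mod m) = (psi l + (psi ^^ (phi ^^ l) 1) j) mod m" .
qed

abbreviation "m2 \<equiv> skew_ord m psi"

lemma piQ: "l < m \<Longrightarrow> skew_pi m psi l mod m2 = (phi ^^ l) 1 mod m2"
  using Q.pi_props(2)[OF G4] psi0 by simp

lemma m2_dvd: "m2 dvd n"
  using Q.id_iff psi_n by blast

lemma G5: "(\<Sum>l<i. (phi ^^ ((psi ^^ l) 1)) 1) mod n = phi (i mod n)"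
proof (induction i)
  case 0 then show ?case by (simp add: phi0)
next
  case (Suc i)
  have n1: "1 < n" using n2 by simp
  have m1: "1 < m" using m2 by simp
  have imn: "i mod n < n" using n2 by simp
  have "(psi ^^ i) 1 = s 1 (i mod n) mod m" using G3[OF m1] by simp
  also have "s 1 (i mod n) = pi (i mod n)" by (rule s1)
  finally have "(psi ^^ i) 1 = pi (i mod n) mod m" .
  then have X: "(phi ^^ ((psi ^^ i) 1)) 1 = (phi ^^ pi (i mod n)) 1"
    using eqpow[of "pi (i mod n) mod m" "pi (i mod n)" 1] n1 by simp
  have "(\<Sum>l<Suc i. (phi ^^ ((psi ^^ l) 1)) 1) mod n
      = ((\<Sum>l<i. (phi ^^ ((psi ^^ l) 1)) 1) mod n + (phi ^^ ((psi ^^ i) 1)) 1) mod n"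
    by (simp add: mod_add_left_eq)
  also have "\<dots> = (phi (i mod n) + (phi ^^ pi (i mod n)) 1) mod n" using Suc X by simp
  also have "\<dots> = phi ((i mod n + 1) mod n)"
  proof -
    have V: "\<forall>b<n. phi ((i mod n + b) mod n) = (phi (i mod n) + (phi ^^ pi (i mod n)) b) mod n"
      using pi_valid[OF imn] unfolding valid_def .
    show ?thesis using V[rule_format, OF n1] by (rule sym)
  qed
  also have "(i mod n + 1) mod n = Suc i mod n" by (simp add: mod_Suc_eq)
  finally show ?case .
qed

lemma m2_le: "m2 \<le> n" using m2_dvd n2 by (simp add: dvd_imp_le)

lemma chi:
  assumes i: "i < m2"
  shows "skew_sigma m psi i (1 mod m) = phi i mod m2"
proof -
  have m1: "1 < m" using m2 by simp
  have "skew_sigma m psi i (1 mod m) = (\<Sum>l<i. skew_pi m psi ((psi ^^ l) 1)) mod m2"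
    unfolding skew_sigma_def one_mod_m by simp
  also have "\<dots> = (\<Sum>l<i. skew_pi m psi ((psi ^^ l) 1) mod m2) mod m2"
    by (simp add: mod_sum_eq)
  also have "\<dots> = (\<Sum>l<i. (phi ^^ ((psi ^^ l) 1)) 1 mod m2) mod m2"
  proof -
    have "\<And>l. skew_pi m psi ((psi ^^ l) 1) mod m2 = (phi ^^ ((psi ^^ l) 1)) 1 mod m2"
      using piQ Q.pow_maps m1 by blast
    then show ?thesis by simp
  qed
  also have "\<dots> = (\<Sum>l<i. (phi ^^ ((psi ^^ l) 1)) 1) mod m2" by (simp add: mod_sum_eq)
  also have "\<dots> = ((\<Sum>l<i. (phi ^^ ((psi ^^ l) 1)) 1) mod n) mod m2"
    using m2_dvd by (simp add: mod_mod_cancel)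
  also have "\<dots> = phi (i mod n) mod m2" using G5 by simp
  also have "i mod n = i" using i m2_le by simp
  finally show ?thesis .
qed

lemma derived_pair: "derived (a, f) = (skew_ord a f, \<lambda>x. skew_sigma a f x (1 mod a))"
  by (simp only: derived_def prod.case)

lemma derived2:
  "derived (derived (n, phi)) = (m2, \<lambda>i. skew_sigma m psi i (1 mod m))"
  by (simp only: derived_pair one_mod_n)

end


lemma derived_pair_g: "derived (a, f) = (skew_ord a f, \<lambda>x. skew_sigma a f x (1 mod a))"
  by (simp only: derived_def prod.case)

lemma iter_cong:
  assumes "\<forall>x<k. f x = g x" "\<forall>x<k. g x < k" "x < k"
  shows "(f ^^ j) x = (g ^^ j) x \<and> (g ^^ j) x < k"
  using assms(3)
proof (induction j)
  case 0 then show ?case by simp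
next
  case (Suc j)
  then show ?case using assms(1,2) by simp
qed

lemma derived_cong:
  assumes fg: "\<And>x. x < k \<Longrightarrow> f x = g x" and gm: "\<And>x. x < k \<Longrightarrow> g x < k" and k: "1 \<le> k"
  shows "derived (k, f) = derived (k, g)"
proof -
  have fg': "\<forall>x<k. f x = g x" using fg by blast
  have gm': "\<forall>x<k. g x < k" using gm by blast
  have it: "\<And>j x. x < k \<Longrightarrow> (f ^^ j) x = (g ^^ j) x" using iter_cong[OF fg' gm'] by blast
  have itm: "\<And>j x. x < k \<Longrightarrow> (g ^^ j) x < k" using iter_cong[OF fg' gm'] by blast
  have ord: "skew_ord k f = skew_ord k g"
    unfolding skew_ord_def using it by simp
  have pi: "skew_pi k f a = skew_pi k g a" if a: "a < k" for a
  proof -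
    have "\<And>i. (\<forall>b<k. f ((a + b) mod k) = (f a + (f ^^ i) b) mod k) \<longleftrightarrow>
               (\<forall>b<k. g ((a + b) mod k) = (g a + (g ^^ i) b) mod k)"
      using fg a it k by simp
    then show ?thesis unfolding skew_pi_def ord by simp
  qed
  have sig: "skew_sigma k f x y = skew_sigma k g x y" if y: "y < k" for x y
  proof -
    have "\<And>i. skew_pi k f ((f ^^ i) y) = skew_pi k g ((g ^^ i) y)"
      using pi it itm y by simp
    then show ?thesis unfolding skew_sigma_def ord by simp
  qed
  have "1 mod k < k" using k by simp
  then show ?thesis using ord sig by (simp only: derived_pair_g)
qed

lemma derived_cong_pow:
  assumes "derived (k, f) = derived (k, g)"
  shows "(derived ^^ Suc c) (k, f) = (derived ^^ Suc c) (k, g)"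
  using assms by (simp only: funpow_Suc_right comp_apply)

lemma Z1_chain: "h 0 = 0 \<Longrightarrow> fst ((derived ^^ c) (1, h)) = 1"
proof (induction c arbitrary: h)
  case 0 then show ?case by simp
next
  case (Suc c)
  have p0: "(h ^^ k) 0 = 0" for k by (induction k) (simp_all add: Suc.prems)
  have o: "skew_ord 1 h = 1" unfolding skew_ord_def
    by (rule Least_equality) (auto simp: p0 Suc.prems)
  have "(derived ^^ Suc c) (1, h) = (derived ^^ c) (derived (1, h))"
    by (simp only: funpow_Suc_right comp_apply)
  also have "derived (1, h) = (1, \<lambda>x. skew_sigma 1 h x (1 mod 1))"
    by (simp only: derived_pair_g o)
  finally have e: "(derived ^^ Suc c) (1, h) = (derived ^^ c) (1, \<lambda>x. skew_sigma 1 h x (1 mod 1))" .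
  have "fst ((derived ^^ c) (1, \<lambda>x. skew_sigma 1 h x (1 mod 1))) = 1"
    by (rule Suc.IH) (simp add: skew_sigma_def)
  then show ?case using e by simp
qed


definition Enat :: "nat \<Rightarrow> nat \<Rightarrow> nat" where
  "Enat u k = (\<Sum>i<k. u ^ i)"

lemma E_add: "Enat u (a + b) = Enat u a + u ^ a * Enat u b"
proof (induction b)
  case 0 then show ?case by (simp add: Enat_def)
next
  case (Suc b)
  then show ?case by (simp add: Enat_def power_add algebra_simps)
qed

lemma E_pow: "(1 + d) ^ k = 1 + d * Enat (1 + d) k"
proof (induction k)
  case 0 then show ?case by (simp add: Enat_def)
next
  case (Suc k)
  have "(1 + d) ^ Suc k = (1 + d) * (1 + d * Enat (1 + d) k)" using Suc by simp
  also have "\<dots> = 1 + d * (Enat (1 + d) k + (1 + d) ^ k)" using Suc by (simp add: algebra_simps)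
  also have "Enat (1 + d) k + (1 + d) ^ k = Enat (1 + d) (Suc k)" by (simp add: Enat_def)
  finally show ?case .
qed

lemma E_mult: "Enat u (y * p) = Enat u y * (\<Sum>j<p. (u ^ y) ^ j)"
proof (induction p)
  case 0 then show ?case by (simp add: Enat_def)
next
  case (Suc p)
  have "Enat u (y * Suc p) = Enat u (y * p + y)" by (simp add: algebra_simps)
  also have "\<dots> = Enat u (y * p) + u ^ (y * p) * Enat u y" by (rule E_add)
  also have "\<dots> = Enat u y * (\<Sum>j<p. (u ^ y) ^ j) + (u ^ y) ^ p * Enat u y"
    using Suc by (simp add: power_mult)
  also have "\<dots> = Enat u y * (\<Sum>j<Suc p. (u ^ y) ^ j)" by (simp add: algebra_simps)
  finally show ?case .
qed

lemma E_mod_q: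
  assumes "q dvd d"
  shows "Enat (1 + d) k mod q = k mod q"
proof (induction k)
  case 0 then show ?case by (simp add: Enat_def)
next
  case (Suc k)
  have "[(1 + d) ^ k = 1 ^ k] (mod q)"
  proof (rule cong_pow)
    have "d mod q = 0" using assms by simp
    then show "[1 + d = 1] (mod q)" unfolding cong_def by (metis add.right_neutral mod_add_right_eq)
  qed
  then have A: "[(1 + d) ^ k = 1] (mod q)" by simp
  have B: "[Enat (1 + d) k = k] (mod q)" using Suc by (simp add: cong_def)
  have "[Enat (1 + d) k + (1 + d) ^ k = k + 1] (mod q)" using B A by (rule cong_add)
  then show ?case by (simp add: Enat_def cong_def)
qed

lemma sum_lt_double: "2 * (\<Sum>j<k. j) = k * (k - 1::nat)"
  by (induction k) (auto simp: algebra_simps)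

lemma pow_lin_mod:
  assumes "p dvd d'"
  shows "[(1 + d') ^ j = 1 + j * d'] (mod p ^ 2)"
proof (induction j)
  case 0 then show ?case by simp
next
  case (Suc j)
  have "[(1 + d') ^ j * (1 + d') = (1 + j * d') * (1 + d')] (mod p ^ 2)"
    using Suc cong_refl by (rule cong_mult)
  moreover have "(1 + d') ^ Suc j = (1 + d') ^ j * (1 + d')" by simp
  ultimately have "[(1 + d') ^ Suc j = (1 + j * d') * (1 + d')] (mod p ^ 2)" by (simp only:)
  moreover have "(1 + j * d') * (1 + d') = (1 + Suc j * d') + j * (d' * d')"
    by (simp add: algebra_simps)
  moreover have "[(1 + Suc j * d') + j * (d' * d') = 1 + Suc j * d'] (mod p ^ 2)"
  proof -
    have "p ^ 2 dvd j * (d' * d')" using assms by (simp add: power2_eq_square mult_dvd_mono)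
    then obtain r where r: "j * (d' * d') = p ^ 2 * r" by blast
    show ?thesis unfolding cong_def r by (simp add: add.assoc[symmetric])
  qed
  ultimately show ?case using cong_trans by metis
qed

lemma S_props:
  assumes p: "prime p" "odd p" and d: "p dvd d'"
  shows "p dvd (\<Sum>j<p. (1 + d') ^ j)" "\<not> p ^ 2 dvd (\<Sum>j<p. (1 + d') ^ j)"
proof -
  have c1: "[(\<Sum>j<p. (1 + d') ^ j) = (\<Sum>j<p. 1 + j * d')] (mod p ^ 2)"
    by (rule cong_sum) (rule pow_lin_mod[OF d])
  obtain t where t: "d' = p * t" using d by blast
  obtain h where h: "p = 2 * h + 1" using p(2) oddE by blast
  have s: "(\<Sum>j<p. j) = p * h"
  proof -
    have "2 * (\<Sum>j<p. j) = p * (2 * h)" using sum_lt_double[of p] h by simp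
    then show ?thesis by simp
  qed
  have "(\<Sum>j<p. 1 + j * d') = (\<Sum>j<p. 1) + (\<Sum>j<p. j * d')" by (rule sum.distrib)
  also have "(\<Sum>j<p. j * d') = (\<Sum>j<p. j) * d'" by (rule sum_distrib_right[symmetric])
  finally have "(\<Sum>j<p. 1 + j * d') = p + d' * (\<Sum>j<p. j)" by simp
  also have "\<dots> = p + p ^ 2 * (t * h)" using s t by (simp add: power2_eq_square algebra_simps)
  finally have "[(\<Sum>j<p. 1 + j * d') = p] (mod p ^ 2)" by (simp add: cong_def)
  then have c: "[(\<Sum>j<p. (1 + d') ^ j) = p] (mod p ^ 2)" using c1 cong_trans by blast
  have p1: "1 < p" using p(1) prime_gt_1_nat by blast
  have pp: "p < p ^ 2" using p1 by (simp add: power2_eq_square)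
  have m: "(\<Sum>j<p. (1 + d') ^ j) mod p ^ 2 = p" using c pp by (simp add: cong_def)
  show "p dvd (\<Sum>j<p. (1 + d') ^ j)"
  proof -
    have "p dvd (\<Sum>j<p. (1 + d') ^ j) mod p ^ 2" using m by simp
    then show ?thesis by (simp add: dvd_mod_iff power2_eq_square)
  qed
  show "\<not> p ^ 2 dvd (\<Sum>j<p. (1 + d') ^ j)"
  proof
    assume "p ^ 2 dvd (\<Sum>j<p. (1 + d') ^ j)"
    then have "(\<Sum>j<p. (1 + d') ^ j) mod p ^ 2 = 0" by simp
    then show False using m p1 by simp
  qed
qed

lemma E_dvd:
  assumes p: "prime p" "odd p" and d: "p dvd d"
  shows "p ^ s dvd Enat (1 + d) k \<longleftrightarrow> p ^ s dvd k"
proof (induction s arbitrary: k)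
  case 0 then show ?case by simp
next
  case (Suc s)
  let ?u = "1 + d"
  define S where "S y = (\<Sum>j<p. (?u ^ y) ^ j)" for y
  have Sp: "p dvd S y" "\<not> p ^ 2 dvd S y" for y
  proof -
    have "?u ^ y = 1 + d * Enat ?u y" by (rule E_pow)
    moreover have "p dvd d * Enat ?u y" using d by simp
    ultimately show "p dvd S y" "\<not> p ^ 2 dvd S y"
      unfolding S_def using S_props[OF p, of "d * Enat ?u y"] by simp_all
  qed
  have Em: "Enat ?u (y * p) = Enat ?u y * S y" for y unfolding S_def by (rule E_mult)
  show ?case
  proof
    assume A: "p ^ Suc s dvd Enat ?u k"
    then have "p dvd Enat ?u k" by (meson dvd_trans dvd_power Suc_neq_Zero p(1) prime_gt_0_nat zero_less_Suc) 
    then have "p dvd k" using E_mod_q[OF d, of k] by (simp add: dvd_eq_mod_eq_0)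
    then obtain y where y: "k = y * p" by (metis dvd_def mult.commute)
    obtain T where T: "S y = p * T" using Sp(1) by blast
    have nT: "\<not> p dvd T" using Sp(2)[of y] T by (simp add: power2_eq_square)
    have Ek: "Enat ?u k = Enat ?u y * S y" unfolding y by (rule Em)
    have "p ^ Suc s dvd Enat ?u y * (p * T)" using A Ek T by simp
    then have "p ^ s * p dvd (Enat ?u y * T) * p" by (simp add: algebra_simps)
    then have "p ^ s dvd Enat ?u y * T" using p(1) by (simp add: prime_gt_0_nat)
    moreover have "coprime (p ^ s) T" using nT p(1) by (simp add: prime_imp_coprime)
    ultimately have "p ^ s dvd Enat ?u y" using coprime_dvd_mult_left_iff by blast
    then have "p ^ s dvd y" using Suc.IH by blast
    then show "p ^ Suc s dvd k" using y by (simp add: mult_dvd_mono)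
  next
    assume A: "p ^ Suc s dvd k"
    then have "p dvd k" by (meson dvd_trans dvd_power Suc_neq_Zero p(1) prime_gt_0_nat zero_less_Suc)
    then obtain y where y: "k = y * p" by (metis dvd_def mult.commute)
    have "p ^ s * p dvd y * p" using A y by (simp add: algebra_simps)
    then have "p ^ s dvd y" using p(1) by (simp add: prime_gt_0_nat)
    then have "p ^ s dvd Enat ?u y" using Suc.IH by blast
    then have "p ^ s * p dvd Enat ?u y * S y" using Sp(1) by (rule mult_dvd_mono)
    moreover have "Enat ?u k = Enat ?u y * S y" unfolding y by (rule Em)
    ultimately show "p ^ Suc s dvd Enat ?u k" by (simp add: algebra_simps)
  qed
qed


locale fam =
  fixes p e M W :: nat
  assumes p: "prime p" and podd: "odd p" and e1: "1 \<le> e" and M0: "0 < M"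
    and pM: "coprime p M" and MW: "M dvd W" and pW: "\<not> p dvd W"
begin

definition "N = p ^ e * M"
definition "d = p * W"
definition "u = 1 + d"
definition "g = (N - 1) * u"
definition "Ef k = Enat u k mod N"
definition "phiF x = inv_into {0..<N} Ef ((g * Enat u x) mod N)"

lemma p3: "3 \<le> p"
proof -
  have "2 \<le> p" using p prime_ge_2_nat by blast
  moreover have "p \<noteq> 2" using podd by auto
  ultimately show ?thesis by linarith
qed

lemma N3: "3 \<le> N"
proof -
  have "p \<le> p ^ e" using e1 p3 by (simp add: self_le_power)
  moreover have "p ^ e \<le> p ^ e * M" using M0 by simp
  ultimately show ?thesis unfolding N_def using p3 by linarith
qed

lemma N0: "0 < N" using N3 by simp

lemma cop_peM: "coprime (p ^ e) M" using pM by simp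

lemma N_split: "N dvd x \<longleftrightarrow> p ^ e dvd x \<and> M dvd x"
proof
  assume A: "N dvd x"
  have "p ^ e dvd x" using dvd_trans[OF dvd_triv_left A[unfolded N_def]] .
  moreover have "M dvd x" using dvd_trans[OF dvd_triv_right A[unfolded N_def]] .
  ultimately show "p ^ e dvd x \<and> M dvd x" by simp
next
  assume "p ^ e dvd x \<and> M dvd x"
  then show "N dvd x" unfolding N_def using divides_mult[OF _ _ cop_peM] by simp
qed

lemma pd: "p dvd d" unfolding d_def by simp
lemma Md: "M dvd d" unfolding d_def using MW by simp
lemma u_def': "u = 1 + d" by (simp add: u_def)

lemma E_N: "N dvd Enat u k \<longleftrightarrow> N dvd k"
proof -
  have a: "p ^ e dvd Enat u k \<longleftrightarrow> p ^ e dvd k" unfolding u_def using E_dvd[OF p podd pd] .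
  have "Enat u k mod M = k mod M" unfolding u_def using E_mod_q[OF Md] .
  then have b: "M dvd Enat u k \<longleftrightarrow> M dvd k" by (simp add: dvd_eq_mod_eq_0)
  show ?thesis using N_split a b by blast
qed

lemma pe: "p ^ e = p * p ^ (e - 1)" using e1 by (simp add: power_eq_if)

lemma dE: "p ^ (e - 1) dvd k \<Longrightarrow> N dvd d * Enat u k"
proof -
  assume "p ^ (e - 1) dvd k"
  then have "p ^ (e - 1) dvd Enat u k" unfolding u_def using E_dvd[OF p podd pd] by blast
  then have "p ^ (e - 1) dvd W * Enat u k" by simp
  then have "p * p ^ (e - 1) dvd p * (W * Enat u k)" by (rule mult_dvd_mono[OF dvd_refl])
  then have "p ^ e dvd d * Enat u k" using pe unfolding d_def by (simp add: mult.assoc)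
  moreover have "M dvd d * Enat u k" using Md by simp
  ultimately show ?thesis using N_split by blast
qed

lemma upow1: "p ^ (e - 1) dvd k \<Longrightarrow> [u ^ k = 1] (mod N)"
proof -
  assume k: "p ^ (e - 1) dvd k"
  have "u ^ k = 1 + d * Enat u k" unfolding u_def by (rule E_pow)
  moreover obtain r where "d * Enat u k = N * r" using dE[OF k] by blast
  ultimately have "u ^ k = 1 + N * r" by simp
  then show ?thesis unfolding cong_def by (simp only: mod_mult_self2)
qed

lemma peN: "p ^ (e - 1) dvd N" unfolding N_def using pe by simp

lemma Ek_mod: "Enat u (k mod N) mod N = Enat u k mod N"
proof -
  define q where "q = k div N"
  have k: "k = N * q + k mod N" unfolding q_def by simp
  have "Enat u k = Enat u (N * q) + u ^ (N * q) * Enat u (k mod N)"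
    by (subst k) (rule E_add)
  moreover have A: "[Enat u (N * q) = 0] (mod N)" using E_N by (simp add: cong_0_iff)
  moreover have "[u ^ (N * q) = 1] (mod N)" using upow1 peN by simp
  then have B: "[u ^ (N * q) * Enat u (k mod N) = 1 * Enat u (k mod N)] (mod N)"
    by (rule cong_scalar_right)
  ultimately have "[Enat u k = 0 + 1 * Enat u (k mod N)] (mod N)"
    using cong_add[OF A B] by simp
  then show ?thesis by (simp add: cong_def)
qed

lemma cop_uN: "coprime u N"
proof -
  have "coprime u d" unfolding u_def by simp
  then have "coprime u p" "coprime u M" using coprime_divisors[OF dvd_refl pd] coprime_divisors[OF dvd_refl Md] by simp_all
  then show ?thesis unfolding N_def by simp
qed

lemma cop_gN: "coprime g N"
proof -
  have c: "coprime (N - 1) N" by (rule coprime_diff_one_left_nat[OF N0])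
  show ?thesis unfolding g_def using c cop_uN by simp
qed

lemma E_inj_le:
  assumes "a \<le> b" "b < N" "Enat u a mod N = Enat u b mod N"
  shows "a = b"
proof -
  have "Enat u b = Enat u a + u ^ a * Enat u (b - a)"
    using E_add[of u a "b - a"] assms(1) by simp
  then have "[Enat u a + u ^ a * Enat u (b - a) = Enat u a + 0] (mod N)"
    using assms(3) by (simp add: cong_def)
  then have "[u ^ a * Enat u (b - a) = 0] (mod N)" by (simp only: cong_add_lcancel_nat)
  then have "N dvd u ^ a * Enat u (b - a)" by (simp add: cong_0_iff)
  moreover have "coprime N (u ^ a)" using cop_uN by (simp add: ac_simps)
  ultimately have "N dvd Enat u (b - a)" by (simp add: coprime_dvd_mult_right_iff)
  then have "N dvd b - a" using E_N by blast
  then have m0: "(b - a) mod N = 0" by simp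
  have "b - a < N" using assms by simp
  then have "(b - a) mod N = b - a" by simp
  then have "b - a = 0" using m0 by simp
  then show ?thesis using assms(1) by simp
qed

lemma eqI:
  assumes "x < N" "y < N" "[Enat u x = Enat u y] (mod N)"
  shows "x = y"
proof (cases "x \<le> y")
  case True then show ?thesis using E_inj_le assms by (simp add: cong_def)
next
  case False then show ?thesis using E_inj_le[of y x] assms by (simp add: cong_def)
qed

lemma Ef_bij: "bij_betw Ef {0..<N} {0..<N}"
proof -
  have inj: "inj_on Ef {0..<N}"
  proof (rule inj_onI)
    fix x y assume "x \<in> {0..<N}" "y \<in> {0..<N}" "Ef x = Ef y"
    then show "x = y" using eqI[of x y] unfolding Ef_def cong_def by simp
  qed
  have sub: "Ef ` {0..<N} \<subseteq> {0..<N}" unfolding Ef_def using N0 by auto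
  have "Ef ` {0..<N} = {0..<N}" using endo_inj_surj[OF _ sub inj] by simp
  then show ?thesis using inj unfolding bij_betw_def by simp
qed

lemma Ef_img: "Ef ` {0..<N} = {0..<N}" using Ef_bij unfolding bij_betw_def by simp

lemma phiF_lt: "phiF x < N"
proof -
  have "(g * Enat u x) mod N \<in> Ef ` {0..<N}" using Ef_img N0 by simp
  then have "phiF x \<in> {0..<N}" unfolding phiF_def by (rule inv_into_into)
  then show ?thesis by simp
qed

lemma phiF_E: "[Enat u (phiF x) = g * Enat u x] (mod N)"
proof -
  have "(g * Enat u x) mod N \<in> Ef ` {0..<N}" using Ef_img N0 by simp
  then have "Ef (phiF x) = (g * Enat u x) mod N" unfolding phiF_def by (rule f_inv_into_f)
  then show ?thesis unfolding Ef_def cong_def by simp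
qed

lemma phiF_iter: "a < N \<Longrightarrow> (phiF ^^ j) a < N \<and> [Enat u ((phiF ^^ j) a) = g ^ j * Enat u a] (mod N)"
proof (induction j)
  case 0 then show ?case by simp
next
  case (Suc j)
  have "[Enat u (phiF ((phiF ^^ j) a)) = g * Enat u ((phiF ^^ j) a)] (mod N)" by (rule phiF_E)
  also have "[g * Enat u ((phiF ^^ j) a) = g * (g ^ j * Enat u a)] (mod N)"
    using Suc by (simp add: cong_scalar_left)
  finally show ?case using phiF_lt by (simp add: mult.assoc)
qed

lemma E_sum: "[Enat u ((x + y) mod N) = Enat u x + u ^ x * Enat u y] (mod N)"
  using Ek_mod[of "x + y"] E_add[of u x y] by (simp add: cong_def)

end


context fam
begin

definition "t = p ^ (e - 1) + 1"

lemma Nm1sq: "[(N - 1) ^ 2 = 1] (mod N)"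
proof -
  define k where "k = N - 2"
  have k: "N = k + 2" using N3 by (simp add: k_def)
  have "(N - 1) ^ 2 = 1 + N * k" unfolding k by (simp add: power2_eq_square algebra_simps)
  then show ?thesis unfolding cong_def by (simp only: mod_mult_self2)
qed

lemma gt: "[g ^ t = u] (mod N)"
proof -
  have "odd (p ^ (e - 1))" using podd by simp
  then have "even (p ^ (e - 1) + 1)" by simp
  then obtain h where h: "p ^ (e - 1) + 1 = 2 * h" by (rule evenE)
  have t2: "t = 2 * h" using h t_def by simp
  have g1: "g ^ t = (N - 1) ^ t * u ^ t" unfolding g_def by (simp add: power_mult_distrib)
  have g2: "(N - 1) ^ t = ((N - 1) ^ 2) ^ h" unfolding t2 by (simp add: power_mult)
  have g3: "u ^ t = u ^ (p ^ (e - 1)) * u" unfolding t_def by (simp add: power_add)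
  have "g ^ t = ((N - 1) ^ 2) ^ h * (u ^ (p ^ (e - 1)) * u)" using g1 g2 g3 by simp
  moreover have X: "[((N - 1) ^ 2) ^ h = 1 ^ h] (mod N)" using Nm1sq by (rule cong_pow)
  moreover have Y: "[u ^ (p ^ (e - 1)) = 1] (mod N)" using upow1 by simp
  have "[((N - 1) ^ 2) ^ h * (u ^ (p ^ (e - 1)) * u) = 1 ^ h * (1 * u)] (mod N)"
    using X cong_mult[OF Y cong_refl] by (rule cong_mult)
  ultimately show ?thesis by simp
qed

lemma gi:
  assumes "c \<le> a + N"
  shows "[u ^ c * g ^ (1 + (a + N - c) * t) = g * u ^ a] (mod N)"
proof -
  have e: "g ^ (1 + (a + N - c) * t) = g * (g ^ t) ^ (a + N - c)"
    by (simp add: power_add power_mult mult.commute)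
  have A: "[(g ^ t) ^ (a + N - c) = u ^ (a + N - c)] (mod N)" using gt by (rule cong_pow)
  have "u ^ c * g ^ (1 + (a + N - c) * t) = u ^ c * (g * (g ^ t) ^ (a + N - c))" using e by simp
  also have "[u ^ c * (g * (g ^ t) ^ (a + N - c)) = u ^ c * (g * u ^ (a + N - c))] (mod N)"
    using A by (simp add: cong_scalar_left)
  also have "u ^ c * (g * u ^ (a + N - c)) = g * u ^ a * u ^ N"
  proof -
    have "c + (a + N - c) = a + N" using assms by simp
    then have "u ^ c * u ^ (a + N - c) = u ^ a * u ^ N" by (simp add: power_add[symmetric])
    then show ?thesis by (simp add: algebra_simps)
  qed
  also have "[g * u ^ a * u ^ N = g * u ^ a * 1] (mod N)"
    by (rule cong_scalar_left[OF upow1[OF peN]])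
  finally show ?thesis by simp
qed

lemma E1: "Enat u 1 = 1" by (simp add: Enat_def)
lemma E1': "Enat u (Suc 0) = Suc 0" by (simp add: Enat_def)
lemma E0: "Enat u 0 = 0" by (simp add: Enat_def)

lemma skewF: "skew_morphism N phiF"
proof -
  have inj: "inj_on phiF {0..<N}"
  proof (rule inj_onI)
    fix x y assume xy: "x \<in> {0..<N}" "y \<in> {0..<N}" "phiF x = phiF y"
    have "[g * Enat u x = Enat u (phiF x)] (mod N)" using phiF_E by (rule cong_sym)
    also have "Enat u (phiF x) = Enat u (phiF y)" using xy by simp
    also have "[Enat u (phiF y) = g * Enat u y] (mod N)" by (rule phiF_E)
    finally have "[g * Enat u x = g * Enat u y] (mod N)" .
    then have "[Enat u x = Enat u y] (mod N)" using cong_mult_lcancel_nat[OF cop_gN] by simp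
    then show "x = y" using eqI[of x y] xy by simp
  qed
  have sub: "phiF ` {0..<N} \<subseteq> {0..<N}" using phiF_lt by auto
  have bij: "bij_betw phiF {0..<N} {0..<N}"
    using endo_inj_surj[OF _ sub inj] inj unfolding bij_betw_def by simp
  have z: "phiF 0 = 0"
  proof -
    have "[Enat u (phiF 0) = Enat u 0] (mod N)" using phiF_E[of 0] by (simp add: E0)
    then show ?thesis using eqI[of "phiF 0" 0] phiF_lt N0 by simp
  qed
  have sk: "\<exists>i. \<forall>b<N. phiF ((a + b) mod N) = (phiF a + (phiF ^^ i) b) mod N" if a: "a < N" for a
  proof -
    define c where "c = phiF a"
    define i where "i = 1 + (a + N - c) * t"
    have cle: "c \<le> a + N" using phiF_lt c_def by (simp add: less_imp_le_nat trans_le_add2)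
    have G: "[u ^ c * g ^ i = g * u ^ a] (mod N)" unfolding i_def by (rule gi[OF cle])
    have "phiF ((a + b) mod N) = (c + (phiF ^^ i) b) mod N" if b: "b < N" for b
    proof (rule eqI)
      show "phiF ((a + b) mod N) < N" by (rule phiF_lt)
      show "(c + (phiF ^^ i) b) mod N < N" using N0 by simp
      have L: "[Enat u (phiF ((a + b) mod N)) = g * (Enat u a + u ^ a * Enat u b)] (mod N)"
        using phiF_E cong_scalar_left[OF E_sum] by (rule cong_trans)
      have R1: "[Enat u ((c + (phiF ^^ i) b) mod N) = Enat u c + u ^ c * Enat u ((phiF ^^ i) b)] (mod N)"
        by (rule E_sum)
      have R2: "[Enat u c = g * Enat u a] (mod N)" unfolding c_def by (rule phiF_E)
      have R3: "[Enat u ((phiF ^^ i) b) = g ^ i * Enat u b] (mod N)" using phiF_iter b by blast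
      have R4: "[u ^ c * Enat u ((phiF ^^ i) b) = u ^ c * (g ^ i * Enat u b)] (mod N)"
        using R3 by (rule cong_scalar_left)
      have R5: "[u ^ c * (g ^ i * Enat u b) = g * u ^ a * Enat u b] (mod N)"
        using cong_scalar_right[OF G, of "Enat u b"] by (simp add: mult.assoc)
      have R: "[Enat u ((c + (phiF ^^ i) b) mod N) = g * Enat u a + g * u ^ a * Enat u b] (mod N)"
        using R1 cong_add[OF R2 cong_trans[OF R4 R5]] by (rule cong_trans)
      have "g * (Enat u a + u ^ a * Enat u b) = g * Enat u a + g * u ^ a * Enat u b"
        by (simp add: algebra_simps)
      then have L': "[Enat u (phiF ((a + b) mod N)) = g * Enat u a + g * u ^ a * Enat u b] (mod N)"
        using L by simp
      show "[Enat u (phiF ((a + b) mod N)) = Enat u ((c + (phiF ^^ i) b) mod N)] (mod N)"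
        using L' cong_sym[OF R] by (rule cong_trans)
    qed
    then show ?thesis unfolding c_def by blast
  qed
  show ?thesis unfolding skew_morphism_def using bij z sk by blast
qed

lemma ordF: "skew_ord N phiF \<noteq> 1"
proof
  assume o1: "skew_ord N phiF = 1"
  have bij: "bij_betw phiF {0..<N} {0..<N}" using skewF unfolding skew_morphism_def by blast
  have "\<exists>k>0. \<forall>x<N. (phiF ^^ k) x = x" by (rule bij_finite_order[OF bij])
  then have "0 < skew_ord N phiF \<and> (\<forall>x<N. (phiF ^^ skew_ord N phiF) x = x)"
    unfolding skew_ord_def by (rule LeastI_ex)
  then have "phiF 1 = 1" using o1 N3 by simp
  then have "[1 = g * 1] (mod N)" using phiF_E[of 1] by (simp add: E1 E1')
  then have "[1 = g] (mod N)" by simp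
  then have "[1 + u = g + u] (mod N)" using cong_refl by (rule cong_add)
  moreover have "g + u = N * u" unfolding g_def using N0 by (simp add: algebra_simps)
  ultimately have "(1 + u) mod N = 0" by (simp add: cong_def)
  then have "N dvd 1 + u" by (rule mod_0_imp_dvd)
  then have "p ^ e dvd 1 + u" using N_split by blast
  moreover have "p dvd p ^ e" using e1 by (simp add: dvd_power)
  ultimately have "p dvd 1 + u" by (rule dvd_trans[rotated])
  then have "p dvd 2 + p * W" unfolding u_def d_def by simp
  then have "p dvd (2 + p * W) - p * W" by (rule dvd_diff_nat) simp
  then have "p dvd 2" by simp
  then have "p \<le> 2" by (simp add: dvd_imp_le)
  then show False using p3 by simp
qed

end


context fam
begin

sublocale SG: skew_gen N phiF
proof
  show "2 \<le> N" using N3 by simp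
  show "skew_morphism N phiF" by (rule skewF)
  show "skew_ord N phiF \<noteq> 1" by (rule ordF)
qed

lemma not_p_1u: "\<not> p dvd 1 + u"
proof
  assume "p dvd 1 + u"
  then have "p dvd 2 + p * W" unfolding u_def d_def by simp
  then have "p dvd (2 + p * W) - p * W" by (rule dvd_diff_nat) simp
  then have "p dvd 2" by simp
  then have "p \<le> 2" by (simp add: dvd_imp_le)
  then show False using p3 by simp
qed

lemma upow_E: "u ^ k = 1 + d * Enat u k" unfolding u_def by (rule E_pow)

lemma core_suff:
  assumes k: "p ^ (e - 1) dvd k" "k < N" and b: "b < N"
  shows "(phiF ^^ j) ((k + b) mod N) = ((phiF ^^ j) k + (phiF ^^ j) b) mod N"
proof (rule eqI)
  show "(phiF ^^ j) ((k + b) mod N) < N" using phiF_iter N0 by simp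
  show "((phiF ^^ j) k + (phiF ^^ j) b) mod N < N" using N0 by simp
  define cj where "cj = (phiF ^^ j) k"
  define bj where "bj = (phiF ^^ j) b"
  have uk: "[u ^ k = 1] (mod N)" using upow1 k(1) by simp
  have Ik: "[Enat u cj = g ^ j * Enat u k] (mod N)" using phiF_iter k(2) cj_def by blast
  have Ib: "[Enat u bj = g ^ j * Enat u b] (mod N)" using phiF_iter b bj_def by blast
  have ucj: "[u ^ cj = 1] (mod N)"
  proof -
    have X: "[d * Enat u cj = d * (g ^ j * Enat u k)] (mod N)" using Ik by (rule cong_scalar_left)
    have "N dvd d * (g ^ j * Enat u k)"
    proof -
      have "N dvd d * Enat u k" using dE k(1) by simp
      then have "N dvd (d * Enat u k) * g ^ j" by (rule dvd_mult2)
      then show ?thesis by (simp add: ac_simps)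
    qed
    then have "[d * (g ^ j * Enat u k) = 0] (mod N)" by (simp add: cong_0_iff)
    with X have Z: "[d * Enat u cj = 0] (mod N)" by (rule cong_trans)
    have "[1 + d * Enat u cj = 1 + 0] (mod N)" by (rule cong_add[OF cong_refl Z])
    then show ?thesis using upow_E by simp
  qed
  have L: "[Enat u ((phiF ^^ j) ((k + b) mod N)) = g ^ j * Enat u k + g ^ j * Enat u b] (mod N)"
  proof -
    have "[Enat u ((phiF ^^ j) ((k + b) mod N)) = g ^ j * Enat u ((k + b) mod N)] (mod N)"
      using phiF_iter N0 by simp
    also have "[g ^ j * Enat u ((k + b) mod N) = g ^ j * (Enat u k + u ^ k * Enat u b)] (mod N)"
      by (rule cong_scalar_left[OF E_sum])
    also have "[g ^ j * (Enat u k + u ^ k * Enat u b) = g ^ j * (Enat u k + 1 * Enat u b)] (mod N)"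
      by (rule cong_scalar_left[OF cong_add[OF cong_refl cong_scalar_right[OF uk]]])
    finally show ?thesis by (simp add: algebra_simps)
  qed
  have R: "[Enat u ((cj + bj) mod N) = g ^ j * Enat u k + g ^ j * Enat u b] (mod N)"
  proof -
    have "[Enat u ((cj + bj) mod N) = Enat u cj + u ^ cj * Enat u bj] (mod N)" by (rule E_sum)
    also have "[Enat u cj + u ^ cj * Enat u bj = g ^ j * Enat u k + 1 * (g ^ j * Enat u b)] (mod N)"
      by (rule cong_add[OF Ik cong_mult[OF ucj Ib]])
    finally show ?thesis by simp
  qed
  show "[Enat u ((phiF ^^ j) ((k + b) mod N)) = Enat u (((phiF ^^ j) k + (phiF ^^ j) b) mod N)] (mod N)"
    using L cong_sym[OF R] unfolding cj_def bj_def by (rule cong_trans)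
qed

lemma core_nec:
  assumes k: "k < N" and eq: "phiF ((k + 1) mod N) = (phiF k + phiF 1) mod N"
  shows "p ^ (e - 1) dvd k"
proof -
  have A: "[Enat u (phiF ((k + 1) mod N)) = g * Enat u k + g * u ^ k] (mod N)"
  proof -
    have "[Enat u (phiF ((k + 1) mod N)) = g * Enat u ((k + 1) mod N)] (mod N)" by (rule phiF_E)
    also have "[g * Enat u ((k + 1) mod N) = g * (Enat u k + u ^ k * Enat u 1)] (mod N)"
      by (rule cong_scalar_left[OF E_sum])
    finally show ?thesis by (simp add: E1 E1' algebra_simps)
  qed
  have B: "[Enat u ((phiF k + phiF 1) mod N) = g * Enat u k + u ^ (phiF k) * g] (mod N)"
  proof -
    have "[Enat u ((phiF k + phiF 1) mod N) = Enat u (phiF k) + u ^ (phiF k) * Enat u (phiF 1)] (mod N)"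
      by (rule E_sum)
    also have "[Enat u (phiF k) + u ^ (phiF k) * Enat u (phiF 1) = g * Enat u k + u ^ (phiF k) * (g * Enat u 1)] (mod N)"
      by (rule cong_add[OF phiF_E cong_scalar_left[OF phiF_E]])
    finally show ?thesis by (simp add: E1 E1')
  qed
  have "[g * Enat u k + g * u ^ k = Enat u ((phiF k + phiF 1) mod N)] (mod N)"
    using cong_sym[OF A] eq by simp
  then have "[g * Enat u k + g * u ^ k = g * Enat u k + u ^ (phiF k) * g] (mod N)"
    using B by (rule cong_trans)
  then have "[g * u ^ k = g * u ^ (phiF k)] (mod N)" by (simp add: cong_add_lcancel_nat mult.commute)
  then have "[u ^ k = u ^ (phiF k)] (mod N)" using cong_mult_lcancel_nat[OF cop_gN] by simp
  then have "[1 + d * Enat u k = 1 + d * Enat u (phiF k)] (mod N)" using upow_E by simp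
  then have "[d * Enat u k = d * Enat u (phiF k)] (mod N)" by (simp only: cong_add_lcancel_nat)
  also have "[d * Enat u (phiF k) = d * (g * Enat u k)] (mod N)" by (rule cong_scalar_left[OF phiF_E])
  finally have C: "[d * Enat u k = d * (g * Enat u k)] (mod N)" .
  have "[d * Enat u k * (1 + u) = d * (g * Enat u k) + d * Enat u k * u] (mod N)"
  proof -
    have "d * Enat u k * (1 + u) = d * Enat u k + d * Enat u k * u" by (simp add: algebra_simps)
    then show ?thesis using cong_add[OF C cong_refl] by simp
  qed
  moreover have "d * (g * Enat u k) + d * Enat u k * u = N * (u * d * Enat u k)"
  proof -
    have "g + u = N * u" unfolding g_def using N0 by (simp add: algebra_simps)
    then have "d * Enat u k * (g + u) = d * Enat u k * (N * u)" by simp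
    then show ?thesis by (simp add: algebra_simps)
  qed
  ultimately have "[d * Enat u k * (1 + u) = 0] (mod N)" by (simp add: cong_def)
  then have "N dvd d * Enat u k * (1 + u)" by (simp add: cong_0_iff)
  then have "p ^ e dvd d * Enat u k * (1 + u)" using N_split by blast
  then have "p * p ^ (e - 1) dvd p * (Enat u k * (W * (1 + u)))" using pe unfolding d_def
    by (simp add: algebra_simps)
  then have "p ^ (e - 1) dvd Enat u k * (W * (1 + u))" using p3 by (simp add: nat_mult_dvd_cancel1)
  moreover have "coprime (p ^ (e - 1)) (W * (1 + u))"
  proof -
    have c1: "coprime p W" using pW p by (simp add: prime_imp_coprime)
    have c2: "coprime p (1 + u)" using not_p_1u p by (rule prime_imp_coprime[rotated])
    have "coprime p (W * (1 + u))" using c1 c2 by (rule coprime_mult_right_iff[THEN iffD2, OF conjI])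
    then show ?thesis by (rule coprime_power_left_iff[THEN iffD2, OF disjI1])
  qed
  ultimately have "p ^ (e - 1) dvd Enat u k" by (simp add: coprime_dvd_mult_left_iff)
  then show ?thesis unfolding u_def using E_dvd[OF p podd pd] by simp
qed

lemma coreF: "k < N \<Longrightarrow> SG.core k \<longleftrightarrow> p ^ (e - 1) dvd k"
proof
  assume k: "k < N" and c: "SG.core k"
  have m1: "1 < SG.m" using SG.m2 by simp
  have n1: "1 < N" using N3 by simp
  have "(phiF ^^ 1) ((k + 1) mod N) = ((phiF ^^ 1) k + (phiF ^^ 1) 1) mod N"
    using c[unfolded SG.core_def, rule_format, OF m1 n1] .
  then show "p ^ (e - 1) dvd k" using core_nec k by simp
next
  assume k: "k < N" and d: "p ^ (e - 1) dvd k"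
  show "SG.core k" unfolding SG.core_def by (intro allI impI) (rule core_suff[OF d k])
qed

lemma m2F: "SG.m2 = p ^ (e - 1)"
proof -
  have "\<And>k. (\<forall>x<SG.m. (SG.psi ^^ k) x = x) \<longleftrightarrow> p ^ (e - 1) dvd k"
  proof -
    fix k
    have "(\<forall>x<SG.m. (SG.psi ^^ k) x = x) \<longleftrightarrow> SG.core (k mod N)" by (rule SG.G3core)
    also have "\<dots> \<longleftrightarrow> p ^ (e - 1) dvd k mod N" using coreF N0 by simp
    also have "\<dots> \<longleftrightarrow> p ^ (e - 1) dvd k" using peN by (rule dvd_mod_iff)
    finally show "(\<forall>x<SG.m. (SG.psi ^^ k) x = x) \<longleftrightarrow> p ^ (e - 1) dvd k" .
  qed
  then have "SG.m2 = (LEAST k. 0 < k \<and> p ^ (e - 1) dvd k)" unfolding skew_ord_def by simp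
  also have "\<dots> = p ^ (e - 1)"
  proof (rule Least_equality)
    show "0 < p ^ (e - 1) \<and> p ^ (e - 1) dvd p ^ (e - 1)" using p3 by simp
    show "\<And>y. 0 < y \<and> p ^ (e - 1) dvd y \<Longrightarrow> p ^ (e - 1) \<le> y" by (simp add: dvd_imp_le)
  qed
  finally show ?thesis .
qed

definition "chiF i = skew_sigma SG.m SG.psi i (1 mod SG.m)"

lemma derived2F: "derived (derived (N, phiF)) = (p ^ (e - 1), chiF)"
  using SG.derived2 m2F unfolding chiF_def by simp

lemma chiF0: "chiF 0 = 0" unfolding chiF_def skew_sigma_def by simp

lemma chiF_eq: "i < p ^ (e - 1) \<Longrightarrow> chiF i = phiF i mod p ^ (e - 1)"
  using SG.chi m2F unfolding chiF_def by simp

lemma fam_red: "2 \<le> e \<Longrightarrow> fam p (e - 1) 1 W"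
  using p podd pW by unfold_locales auto

end


context fam
begin

lemma red:
  assumes e2: "2 \<le> e" and a: "a < p ^ (e - 1)"
  shows "phiF a mod p ^ (e - 1) = fam.phiF p (e - 1) 1 W a"
proof -
  interpret F: fam p "e - 1" 1 W by (rule fam_red[OF e2])
  have NF: "F.N = p ^ (e - 1)" unfolding F.N_def by simp
  have dv: "p ^ (e - 1) dvd N" by (rule peN)
  define c where "c = phiF a"
  have 1: "[Enat u c = g * Enat u a] (mod p ^ (e - 1))"
    unfolding c_def using phiF_E dv by (rule cong_dvd_modulus_nat)
  have 2: "[g = F.g] (mod p ^ (e - 1))"
  proof -
    have "g + u = N * u" unfolding g_def using N0 by (simp add: algebra_simps)
    moreover have "F.g + u = F.N * u" unfolding F.g_def using F.N0 by (simp add: algebra_simps)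
    ultimately have "[g + u = F.g + u] (mod p ^ (e - 1))" using dv NF
      by (simp add: cong_def)
    then show ?thesis by (simp add: cong_add_rcancel_nat)
  qed
  have 3: "[Enat u (c mod F.N) = Enat u c] (mod F.N)" using F.Ek_mod by (simp add: cong_def)
  have 4: "[Enat u (F.phiF a) = F.g * Enat u a] (mod F.N)" by (rule F.phiF_E)
  have "[Enat u (c mod F.N) = F.g * Enat u a] (mod F.N)"
  proof -
    have "[Enat u c = F.g * Enat u a] (mod F.N)"
      using 1 cong_scalar_right[OF 2, of "Enat u a"] NF by (metis cong_trans)
    then show ?thesis using 3 by (metis cong_trans)
  qed
  then have "[Enat u (c mod F.N) = Enat u (F.phiF a)] (mod F.N)" using cong_sym[OF 4] by (rule cong_trans)
  then have "c mod F.N = F.phiF a" using F.eqI[of "c mod F.N" "F.phiF a"] F.N0 F.phiF_lt by simp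
  then show ?thesis unfolding c_def NF .
qed

end

lemma chain_all:
  assumes "fam p e M W"
  shows "(c < 2 * e \<longrightarrow> 2 \<le> fst ((derived ^^ c) (fam.N p e M, fam.phiF p e M W))) \<and>
         (2 * e \<le> c \<longrightarrow> fst ((derived ^^ c) (fam.N p e M, fam.phiF p e M W)) = 1)"
  using assms
proof (induction e arbitrary: M W c)
  case 0
  have "1 \<le> (0::nat)" using fam.e1[OF "0.prems"] .
  then show ?case by simp
next
  case (Suc e)
  interpret F: fam p "Suc e" M W by (rule Suc.prems)
  show ?case
  proof (cases "c < 2")
    case True
    then consider "c = 0" | "c = 1" by linarith
    then show ?thesis
    proof cases
      case 1
      then show ?thesis using F.N3 by simp
    next
      case 2
      have "2 \<le> skew_ord F.N F.phiF" using F.SG.m2 by simp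
      then show ?thesis using 2 by (simp add: derived_pair_g)
    qed
  next
    case False
    define c' where "c' = c - 2"
    have c': "c = c' + 2" using False c'_def by simp
    have "(derived ^^ c) (F.N, F.phiF) = (derived ^^ c') (derived (derived (F.N, F.phiF)))"
      unfolding c' by (simp only: funpow_add comp_apply numeral_2_eq_2 funpow.simps id_apply)
    also have "derived (derived (F.N, F.phiF)) = (p ^ e, F.chiF)" using F.derived2F by simp
    finally have D: "(derived ^^ c) (F.N, F.phiF) = (derived ^^ c') (p ^ e, F.chiF)" .
    show ?thesis
    proof (cases "e = 0")
      case True
      then have "fst ((derived ^^ c) (F.N, F.phiF)) = 1" using D Z1_chain F.chiF0 by simp
      then show ?thesis using True c' by simp
    next
      case False
      then have e1: "1 \<le> e" by simp
      have famE: "fam p e 1 W" using F.fam_red e1 by simp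
      interpret G: fam p e 1 W by (rule famE)
      have GN: "G.N = p ^ e" unfolding G.N_def by simp
      show ?thesis
      proof (cases c')
        case 0
        have "2 \<le> p ^ e" using G.N3 GN by simp
        then show ?thesis using D 0 c' e1 by simp
      next
        case (Suc c'')
        have agree: "\<And>x. x < p ^ e \<Longrightarrow> F.chiF x = G.phiF x"
        proof -
          fix x assume x: "x < p ^ e"
          have "F.chiF x = F.phiF x mod p ^ e" using F.chiF_eq x by simp
          also have "\<dots> = G.phiF x" using F.red[of x] x e1 by simp
          finally show "F.chiF x = G.phiF x" .
        qed
        have "derived (p ^ e, F.chiF) = derived (p ^ e, G.phiF)"
        proof (rule derived_cong)
          show "\<And>x. x < p ^ e \<Longrightarrow> F.chiF x = G.phiF x" by (rule agree)
          show "\<And>x. x < p ^ e \<Longrightarrow> G.phiF x < p ^ e" using G.phiF_lt GN by simp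
          have "3 \<le> G.N" by (rule G.N3)
          then show "1 \<le> p ^ e" unfolding GN by simp
        qed
        then have "(derived ^^ Suc c'') (p ^ e, F.chiF) = (derived ^^ Suc c'') (p ^ e, G.phiF)"
          by (rule derived_cong_pow)
        then have "(derived ^^ c') (p ^ e, F.chiF) = (derived ^^ c') (G.N, G.phiF)"
          using Suc GN by simp
        then have E: "(derived ^^ c) (F.N, F.phiF) = (derived ^^ c') (G.N, G.phiF)" using D by simp
        have IH: "(c' < 2 * e \<longrightarrow> 2 \<le> fst ((derived ^^ c') (G.N, G.phiF))) \<and>
            (2 * e \<le> c' \<longrightarrow> fst ((derived ^^ c') (G.N, G.phiF)) = 1)"
          using Suc.IH[OF famE] by simp
        show ?thesis using IH E c' by simp
      qed
    qed
  qed
qed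

lemma complexity_fam:
  assumes "fam p e M W"
  shows "skew_complexity (fam.N p e M) (fam.phiF p e M W) = 2 * e - 1"
proof -
  interpret F: fam p e M W by (rule assms)
  define Fc where "Fc c = fst ((derived ^^ c) (F.N, F.phiF))" for c
  have ch: "\<And>c. (c < 2 * e \<longrightarrow> 2 \<le> Fc c) \<and> (2 * e \<le> c \<longrightarrow> Fc c = 1)"
    unfolding Fc_def using chain_all[OF assms] by blast
  have e1: "1 \<le> e" by (rule F.e1)
  show ?thesis unfolding skew_complexity_def
  proof (rule the_equality)
    show "2 \<le> fst ((derived ^^ (2 * e - 1)) (F.N, F.phiF)) \<and> fst ((derived ^^ Suc (2 * e - 1)) (F.N, F.phiF)) = 1"
      using ch[of "2 * e - 1"] ch[of "Suc (2 * e - 1)"] e1 unfolding Fc_def by simp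
  next
    fix c assume c: "2 \<le> fst ((derived ^^ c) (F.N, F.phiF)) \<and> fst ((derived ^^ Suc c) (F.N, F.phiF)) = 1"
    have "c < 2 * e"
    proof (rule ccontr)
      assume "\<not> c < 2 * e"
      then have "Fc c = 1" using ch[of c] by simp
      then show False using c unfolding Fc_def by simp
    qed
    moreover have "\<not> Suc c < 2 * e" using ch[of "Suc c"] c unfolding Fc_def by auto
    ultimately show "c = 2 * e - 1" by simp
  qed
qed

theorem corollary6p4:
  fixes n p :: nat
  assumes "n \<ge> 2"
    and "Comp n \<subseteq> {0, 1, 2, 3}"
    and "prime p" and "odd p"
  shows "\<not> p ^ 3 dvd n"
proof
  assume dv: "p ^ 3 dvd n"
  have n0: "n \<noteq> 0" using assms(1) by simp
  have pu: "\<not> is_unit p" using assms(3) not_prime_unit by blast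
  define e where "e = multiplicity p n"
  have e3: "3 \<le> e" unfolding e_def using multiplicity_geI[OF n0 pu dv] .
  obtain M where M: "n = p ^ e * M" "\<not> p dvd M"
    unfolding e_def by (rule multiplicity_decompose'[OF n0 pu])
  have M0: "0 < M"
  proof (rule ccontr)
    assume "\<not> 0 < M"
    then have "M = 0" by simp
    then show False using M(1) n0 by simp
  qed
  have fam: "fam p e M M"
  proof
    show "prime p" "odd p" by (rule assms(3), rule assms(4))
    show "1 \<le> e" using e3 by simp
    show "0 < M" by (rule M0)
    show "coprime p M" using M(2) assms(3) by (simp add: prime_imp_coprime)
    show "M dvd M" by simp
    show "\<not> p dvd M" by (rule M(2))
  qed
  interpret F: fam p e M M by (rule fam)
  have Nn: "F.N = n" unfolding F.N_def using M by simp
  have "skew_complexity n F.phiF \<in> Comp n"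
    unfolding Comp_def using F.skewF Nn by auto
  moreover have "skew_complexity n F.phiF = 2 * e - 1" using complexity_fam[OF fam] Nn by simp
  ultimately have "2 * e - 1 \<in> {0, 1, 2, 3}" using assms(2) by auto
  then show False using e3 by auto
qed


end
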